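(* Let $G$ be a finite graph with $n$ vertices, let $0<\epsilon<1$, and let $d$ be an integer such that for every vertex $v$ of $G$, at least $(1-\epsilon)n$ vertices of $G$ are at distance exactly $d$ from $v$. Suppose that for some integer $r\ge 0$ with $2r+1\le d$ and some $N>0$ we have $|N_r(v)|\ge N$ for every vertex $v$ of $G$. Then $|N_{3r+1}(v)| \ge N\epsilon^{-1}$ for every vertex $v$ of $G$.
   Context: For a vertex $v$ and integer $s\ge0$, $N_s(v)$ denotes the set of vertices at graph distance at most $s$ from $v$. The paper calls such a $G$ $\epsilon$-distance-uniform with critical distance $d$. *)

theory Defs
  imports Complex_Main
begin

definition simple_graph :: "'a set \<Rightarrow> ('a \<Rightarrow> 'a \<Rightarrow> bool) \<Rightarrow> bool" where
  "simple_graph V E \<longleftrightarrow> finite V \<and> (\<forall>u v. E u v \<longrightarrow> u \<in> V \<and> v \<in> V)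
     \<and> (\<forall>u v. E u v \<longrightarrow> E v u) \<and> (\<forall>u. \<not> E u u)"

definition walk_len :: "'a set \<Rightarrow> ('a \<Rightarrow> 'a \<Rightarrow> bool) \<Rightarrow> nat \<Rightarrow> 'a \<Rightarrow> 'a \<Rightarrow> bool" where
  "walk_len V E k u v \<longleftrightarrow> (\<exists>xs. length xs = Suc k \<and> hd xs = u \<and> last xs = v
      \<and> set xs \<subseteq> V \<and> (\<forall>i<k. E (xs ! i) (xs ! Suc i)))"

definition dist_le :: "'a set \<Rightarrow> ('a \<Rightarrow> 'a \<Rightarrow> bool) \<Rightarrow> nat \<Rightarrow> 'a \<Rightarrow> 'a \<Rightarrow> bool" where
  "dist_le V E s u v \<longleftrightarrow> (\<exists>k\<le>s. walk_len V E k u v)"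

definition dist_eq :: "'a set \<Rightarrow> ('a \<Rightarrow> 'a \<Rightarrow> bool) \<Rightarrow> nat \<Rightarrow> 'a \<Rightarrow> 'a \<Rightarrow> bool" where
  "dist_eq V E d u v \<longleftrightarrow> walk_len V E d u v \<and> (\<forall>k<d. \<not> walk_len V E k u v)"

definition ball_set :: "'a set \<Rightarrow> ('a \<Rightarrow> 'a \<Rightarrow> bool) \<Rightarrow> nat \<Rightarrow> 'a \<Rightarrow> 'a set" where
  "ball_set V E s v = {u \<in> V. dist_le V E s v u}"

end

theory Submission
  imports Defs
begin

inductive W :: "'a set \<Rightarrow> ('a \<Rightarrow> 'a \<Rightarrow> bool) \<Rightarrow> nat \<Rightarrow> 'a \<Rightarrow> 'a \<Rightarrow> bool" for V E where
  W0: "u \<in> V \<Longrightarrow> W V E 0 u u"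
| WS: "E u w \<Longrightarrow> W V E k w v \<Longrightarrow> W V E (Suc k) u v"

lemma walk_to_W:
  assumes g: "simple_graph V E"
  shows "walk_len V E k u v \<Longrightarrow> W V E k u v"
proof (induction k arbitrary: u)
  case 0
  then obtain xs where xs: "length xs = 1" "hd xs = u" "last xs = v" "set xs \<subseteq> V"
    unfolding walk_len_def by auto
  then obtain a where "xs = [a]" by (metis One_nat_def length_0_conv length_Suc_conv)
  then show ?case using xs by (auto intro: W0)
next
  case (Suc k)
  then obtain xs where xs: "length xs = Suc (Suc k)" "hd xs = u" "last xs = v" "set xs \<subseteq> V"
     "\<forall>i<Suc k. E (xs ! i) (xs ! Suc i)"
    unfolding walk_len_def by blast
  then obtain ys where ys: "xs = u # ys" by (cases xs) auto
  have ly: "length ys = Suc k" using xs ys by simp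
  then have ne: "ys \<noteq> []" by auto
  have "E u (hd ys)" using xs(5) ys ne by (auto simp: hd_conv_nth)
  moreover have "walk_len V E k (hd ys) v"
    unfolding walk_len_def
  proof (intro exI[of _ ys] conjI allI impI)
    show "last ys = v" using xs ys ne by auto
    show "set ys \<subseteq> V" using xs ys by auto
    fix i assume "i < k" then show "E (ys ! i) (ys ! Suc i)" using xs(5) ys
      by (metis Suc_less_eq nth_Cons_Suc)
  qed (use ly in auto)
  ultimately show ?case using Suc.IH by (blast intro: WS)
qed

lemma W_to_walk:
  assumes g: "simple_graph V E"
  shows "W V E k u v \<Longrightarrow> walk_len V E k u v"
proof (induction rule: W.induct)
  case (W0 u)
  then show ?case unfolding walk_len_def by (intro exI[of _ "[u]"]) auto
next
  case (WS u w k v)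
  then obtain ys where ys: "length ys = Suc k" "hd ys = w" "last ys = v" "set ys \<subseteq> V"
     "\<forall>i<k. E (ys ! i) (ys ! Suc i)"
    unfolding walk_len_def by blast
  have ne: "ys \<noteq> []" using ys by auto
  have uV: "u \<in> V" using g WS(1) unfolding simple_graph_def by blast
  show ?case unfolding walk_len_def
  proof (intro exI[of _ "u # ys"] conjI allI impI)
    fix i assume i: "i < Suc k"
    show "E ((u # ys) ! i) ((u # ys) ! Suc i)"
    proof (cases i)
      case 0 then show ?thesis using WS(1) ys ne by (simp add: hd_conv_nth)
    next
      case (Suc j) then show ?thesis using ys(5) i by simp
    qed
  qed (use ys ne uV in auto)
qed

lemma sg_E: "simple_graph V E \<Longrightarrow> E u w \<Longrightarrow> u \<in> V \<and> w \<in> V \<and> E w u"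
  unfolding simple_graph_def by blast

lemma W_V: "W V E k u v \<Longrightarrow> simple_graph V E \<Longrightarrow> u \<in> V \<and> v \<in> V"
  proof (induction rule: W.induct)
  case (W0 u) then show ?case by simp
next
  case (WS u w k v)
  then show ?case using sg_E[OF WS(4) WS(1)] by blast
qed

lemma W_app: "W V E k u v \<Longrightarrow> W V E m v w \<Longrightarrow> W V E (k + m) u w"
proof (induction rule: W.induct)
  case (W0 u) then show ?case by simp
next
  case (WS u w' k v)
  then have "W V E (k + m) w' w" by blast
  then show ?case using W.WS[of E u w' V "k+m" w] WS(1) by simp
qed

lemma W_snoc: "W V E k u v \<Longrightarrow> E v w \<Longrightarrow> simple_graph V E \<Longrightarrow> W V E (Suc k) u w"
proof (induction rule: W.induct)
  case (W0 u)
  then have "w \<in> V" using sg_E[OF W0(3) W0(2)] by blast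
  then have "W V E 0 w w" by (rule W.W0)
  then show ?case using W.WS[of E u w V 0 w] W0(2) by simp
next
  case (WS u w' k v)
  then have "W V E (Suc k) w' w" by blast
  then show ?case using W.WS[of E u w' V "Suc k" w] WS(1) by simp
qed

lemma W_rev: "W V E k u v \<Longrightarrow> simple_graph V E \<Longrightarrow> W V E k v u"
proof (induction rule: W.induct)
  case (W0 u) then show ?case by (auto intro: W.W0)
next
  case (WS u w k v)
  then have "E w u" using sg_E[OF WS(4) WS(1)] by blast
  moreover have "W V E k v w" using WS(3,4) by blast
  ultimately show ?case using W_snoc[of V E k v w u] WS(4) by blast
qed

lemma W_split: "W V E k u v \<Longrightarrow> simple_graph V E \<Longrightarrow> t \<le> k \<Longrightarrow> \<exists>y. W V E t u y \<and> W V E (k - t) y v"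
proof (induction arbitrary: t rule: W.induct)
  case (W0 u) then show ?case by (auto intro: W.W0)
next
  case (WS u w k v)
  show ?case
  proof (cases t)
    case 0
    have "u \<in> V" using sg_E[OF WS(4) WS(1)] by blast
    then show ?thesis using 0 WS(1,2) by (auto intro: W.W0 W.WS)
  next
    case (Suc s)
    then obtain y where "W V E s w y" "W V E (k - s) y v" using WS by auto
    then show ?thesis using Suc WS(1) by (auto intro: W.WS)
  qed
qed


lemma walk_W: "simple_graph V E \<Longrightarrow> walk_len V E k u v \<longleftrightarrow> W V E k u v"
proof
  assume "simple_graph V E" "walk_len V E k u v" then show "W V E k u v" by (rule walk_to_W)
next
  assume "simple_graph V E" "W V E k u v" then show "walk_len V E k u v" by (rule W_to_walk)
qed

lemma dist_le_W: "simple_graph V E \<Longrightarrow> dist_le V E s u v \<longleftrightarrow> (\<exists>k\<le>s. W V E k u v)"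
  unfolding dist_le_def by (simp add: walk_W)

lemma dist_eq_W: "simple_graph V E \<Longrightarrow> dist_eq V E d u v \<longleftrightarrow> W V E d u v \<and> (\<forall>k<d. \<not> W V E k u v)"
  unfolding dist_eq_def by (simp add: walk_W)

lemma claim:
  assumes g: "simple_graph V E" and dr: "2 * r + 1 \<le> d" and vV: "v \<in> V" and zV: "z \<in> V"
  shows "\<exists>y\<in>V. dist_le V E (2*r+1) v y \<and> (\<forall>x. dist_le V E r y x \<longrightarrow> \<not> dist_eq V E d x z)"
proof (cases "\<exists>j\<le>d+r. W V E j v z")
  case True
  then obtain j where j: "j \<le> d + r" "W V E j v z" by blast
  define t where "t = (j + r + 1) - d"
  have tj: "t \<le> j" using dr unfolding t_def by arith
  obtain y where y: "W V E t v y" "W V E (j - t) y z" using W_split[OF j(2) g tj] by blast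
  have yV: "y \<in> V" using W_V[OF y(1) g] by simp
  have t2: "t \<le> 2*r+1" using j(1) unfolding t_def by arith
  have d1: "dist_le V E (2*r+1) v y" unfolding dist_le_W[OF g] using y(1) t2 by blast
  have d2: "\<not> dist_eq V E d x z" if "dist_le V E r y x" for x
  proof -
    have "\<exists>k\<le>r. W V E k y x" using that by (simp only: dist_le_W[OF g])
    then obtain k where k: "k \<le> r" "W V E k y x" by (elim exE conjE)
    have w: "W V E (k + (j - t)) x z" using W_app[OF W_rev[OF k(2) g] y(2)] .
    have lt: "k + (j - t) < d" using k(1) tj dr unfolding t_def by arith
    show ?thesis unfolding dist_eq_W[OF g] using w lt by blast
  qed
  show ?thesis using yV d1 d2 by blast
next
  case False
  have d1: "dist_le V E (2*r+1) v v" unfolding dist_le_W[OF g] using W.W0[OF vV] by blast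
  have d2: "\<not> dist_eq V E d x z" if "dist_le V E r v x" for x
  proof
    assume "dist_eq V E d x z"
    then have wd: "W V E d x z" unfolding dist_eq_W[OF g] by blast
    have "\<exists>k\<le>r. W V E k v x" using that by (simp only: dist_le_W[OF g])
    then obtain k where k: "k \<le> r" "W V E k v x" by (elim exE conjE)
    have w: "W V E (k + d) v z" using W_app[OF k(2) wd] .
    have "k + d \<le> d + r" using k(1) by simp
    then show False using False w by blast
  qed
  show ?thesis using vV d1 d2 by blast
qed

theorem lemma4:
  fixes V :: "'a set" and E :: "'a \<Rightarrow> 'a \<Rightarrow> bool"
    and \<epsilon> :: real and d r :: nat and N :: real
  assumes "simple_graph V E"
    and "0 < \<epsilon>" and "\<epsilon> < 1"
    and "\<forall>v\<in>V. real (card {u \<in> V. dist_eq V E d v u}) \<ge> (1 - \<epsilon>) * real (card V)"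
    and "2 * r + 1 \<le> d"
    and "N > 0"
    and "\<forall>v\<in>V. real (card (ball_set V E r v)) \<ge> N"
  shows "\<forall>v\<in>V. real (card (ball_set V E (3 * r + 1) v)) \<ge> N / \<epsilon>"
proof
  fix v assume vV: "v \<in> V"
  have g: "simple_graph V E" using assms(1) .
  have fV: "finite V" using g unfolding simple_graph_def by blast
  define B where "B = ball_set V E (3 * r + 1) v"
  have BV: "B \<subseteq> V" unfolding B_def ball_set_def by auto
  have fB: "finite B" using BV fV finite_subset by blast
  define n where "n = card V"
  have npos: "real n > 0" using vV fV unfolding n_def by (auto simp: card_gt_0_iff)
  have bad: "real (card {z \<in> V. \<not> dist_eq V E d x z}) \<le> \<epsilon> * real n" if xB: "x \<in> B" for x
  proof -
    have xV: "x \<in> V" using xB BV by blast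
    have eq: "{z \<in> V. \<not> dist_eq V E d x z} = V - {u \<in> V. dist_eq V E d x u}" by auto
    have "card {z \<in> V. \<not> dist_eq V E d x z} = n - card {u \<in> V. dist_eq V E d x u}"
      unfolding eq n_def by (rule card_Diff_subset) (use fV in auto)
    moreover have "card {u \<in> V. dist_eq V E d x u} \<le> n" unfolding n_def
      using fV by (intro card_mono) auto
    ultimately have "real (card {z \<in> V. \<not> dist_eq V E d x z}) = real n - real (card {u \<in> V. dist_eq V E d x u})"
      by simp
    then show ?thesis using assms(4) xV unfolding n_def by (auto simp: algebra_simps)
  qed
  have good: "N \<le> real (card {x \<in> B. \<not> dist_eq V E d x z})" if zV: "z \<in> V" for z
  proof -
    obtain y where y: "y \<in> V" "dist_le V E (2*r+1) v y"
      "\<forall>x. dist_le V E r y x \<longrightarrow> \<not> dist_eq V E d x z"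
      using claim[OF g assms(5) vV zV] by blast
    have "ball_set V E r y \<subseteq> {x \<in> B. \<not> dist_eq V E d x z}"
    proof
      fix x assume "x \<in> ball_set V E r y"
      then have x: "x \<in> V" "dist_le V E r y x" unfolding ball_set_def by auto
      have "\<exists>k\<le>2*r+1. W V E k v y" using y(2) by (simp only: dist_le_W[OF g])
      then obtain k1 where k1: "k1 \<le> 2*r+1" "W V E k1 v y" by (elim exE conjE)
      have "\<exists>k\<le>r. W V E k y x" using x(2) by (simp only: dist_le_W[OF g])
      then obtain k2 where k2: "k2 \<le> r" "W V E k2 y x" by (elim exE conjE)
      have "W V E (k1 + k2) v x" using W_app[OF k1(2) k2(2)] .
      moreover have "k1 + k2 \<le> 3*r+1" using k1 k2 by arith
      ultimately have "dist_le V E (3*r+1) v x" unfolding dist_le_W[OF g] by blast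
      then show "x \<in> {x \<in> B. \<not> dist_eq V E d x z}" using x y(3) unfolding B_def ball_set_def by auto
    qed
    then have "card (ball_set V E r y) \<le> card {x \<in> B. \<not> dist_eq V E d x z}"
      using fB by (intro card_mono) auto
    then have "real (card (ball_set V E r y)) \<le> real (card {x \<in> B. \<not> dist_eq V E d x z})" by simp
    moreover have "N \<le> real (card (ball_set V E r y))" using assms(7) y(1) by blast
    ultimately show ?thesis by linarith
  qed
  have swap: "(\<Sum>z\<in>V. card {x \<in> B. \<not> dist_eq V E d x z}) = (\<Sum>x\<in>B. card {z \<in> V. \<not> dist_eq V E d x z})"
  proof -
    have "(\<Sum>z\<in>V. card {x \<in> B. \<not> dist_eq V E d x z}) = (\<Sum>z\<in>V. \<Sum>x\<in>B. if \<not> dist_eq V E d x z then 1 else 0)"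
      using sum.inter_filter[OF fB, of "\<lambda>_. 1::nat"] by simp
    also have "\<dots> = (\<Sum>x\<in>B. \<Sum>z\<in>V. if \<not> dist_eq V E d x z then 1 else 0)" by (rule sum.swap)
    also have "\<dots> = (\<Sum>x\<in>B. card {z \<in> V. \<not> dist_eq V E d x z})"
      using sum.inter_filter[OF fV, of "\<lambda>_. 1::nat"] by simp
    finally show ?thesis .
  qed
  have "real n * N = (\<Sum>z\<in>V. N)" unfolding n_def by simp
  also have "\<dots> \<le> (\<Sum>z\<in>V. real (card {x \<in> B. \<not> dist_eq V E d x z}))"
    by (rule sum_mono) (use good in auto)
  also have "\<dots> = (\<Sum>x\<in>B. real (card {z \<in> V. \<not> dist_eq V E d x z}))"
    using swap by (simp only: of_nat_sum[symmetric])
  also have "\<dots> \<le> (\<Sum>x\<in>B. \<epsilon> * real n)" by (rule sum_mono) (use bad in auto)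
  also have "\<dots> = real (card B) * \<epsilon> * real n" by simp
  finally have "real n * N \<le> real (card B) * \<epsilon> * real n" .
  then have "real n * N \<le> real n * (real (card B) * \<epsilon>)" by (simp add: ac_simps)
  then have "N \<le> real (card B) * \<epsilon>" using npos by (simp only: mult_le_cancel_left_pos)
  then show "real (card (ball_set V E (3 * r + 1) v)) \<ge> N / \<epsilon>"
    using assms(2) unfolding B_def by (simp add: divide_le_eq)
qed

end
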